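(* Coefficientwise modulo $64$, $$\frac{f_2^8}{f_1^{16}}\equiv 21+12\varphi(-q)^2+16\varphi(q^2)+16\varphi(q^4)\pmod{64}.$$
   Context: For a positive integer $k$ let $f_k:=\prod_{m=1}^\infty(1-q^{mk})$, as a formal power series in $q$. Let $\varphi(q):=\sum_{n=-\infty}^{\infty}q^{n^2}$ (Ramanujan's theta function). Congruences between integer power series are meant coefficientwise. *)

theory Defs
  imports "HOL-Computational_Algebra.Formal_Power_Series"
begin

text \<open>f_k = prod_{m>=1} (1 - q^{mk}) as a formal power series (over the rationals, so
that quotients of series with constant term 1 are available via the library inverse).
The n-th coefficient of the infinite product equals that of the finite product over
m = 1..n, since factors with m > n (k >= 1) do not affect it.\<close>
definition eta_f :: "nat \<Rightarrow> rat fps" where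
  "eta_f k = Abs_fps (\<lambda>n. fps_nth (\<Prod>m\<in>{1..n}. (1 - fps_X ^ (m * k))) n)"

text \<open>Ramanujan's theta function phi(q) = sum_{n in Z} q^{n^2}: the coefficient of q^m is
the number of integers n with n^2 = m.\<close>
definition ramanujan_phi :: "rat fps" where
  "ramanujan_phi = Abs_fps (\<lambda>m. of_nat (card {n::int. n ^ 2 = int m}))"

end

theory Submission
  imports Defs
begin

unbundle fps_syntax


definition cgX :: "nat \<Rightarrow> int fps \<Rightarrow> int fps \<Rightarrow> bool" where
  "cgX D a b \<longleftrightarrow> (\<exists>c. a - b = fps_X ^ D * c)"

lemma cgX_nth: "cgX D a b \<longleftrightarrow> (\<forall>i<D. a $ i = b $ i)"
proof
  assume "cgX D a b"
  then obtain c where c: "a - b = fps_X ^ D * c" unfolding cgX_def by blast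
  show "\<forall>i<D. a $ i = b $ i"
  proof (intro allI impI)
    fix i assume "i < D"
    have "(a - b) $ i = 0" using c \<open>i < D\<close> by (simp add: fps_X_power_mult_nth)
    thus "a $ i = b $ i" by simp
  qed
next
  assume h: "\<forall>i<D. a $ i = b $ i"
  define c where "c = Abs_fps (\<lambda>n. (a - b) $ (n + D))"
  have "a - b = fps_X ^ D * c"
    by (rule fps_ext) (auto simp: fps_X_power_mult_nth c_def h)
  thus "cgX D a b" unfolding cgX_def by blast
qed

lemma cgX_refl[simp]: "cgX D a a" by (simp add: cgX_nth)
lemma cgX_sym: "cgX D a b \<Longrightarrow> cgX D b a" by (simp add: cgX_nth)
lemma cgX_trans: "cgX D a b \<Longrightarrow> cgX D b c \<Longrightarrow> cgX D a c" by (simp add: cgX_nth)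
lemma cgX_mono: "cgX D a b \<Longrightarrow> D' \<le> D \<Longrightarrow> cgX D' a b" by (simp add: cgX_nth)
lemma cgX_add: "cgX D a b \<Longrightarrow> cgX D c d \<Longrightarrow> cgX D (a + c) (b + d)"
  by (simp add: cgX_nth)
lemma cgX_diff: "cgX D a b \<Longrightarrow> cgX D c d \<Longrightarrow> cgX D (a - c) (b - d)"
  by (simp add: cgX_nth)
lemma cgX_mult: "cgX D a b \<Longrightarrow> cgX D c d \<Longrightarrow> cgX D (a * c) (b * d)"
proof -
  assume "cgX D a b" "cgX D c d"
  then obtain e f where e: "a - b = fps_X ^ D * e" and f: "c - d = fps_X ^ D * f"
    unfolding cgX_def by blast
  have "a * c - b * d = (a - b) * c + b * (c - d)" by (simp add: algebra_simps)
  also have "\<dots> = fps_X ^ D * (e * c + b * f)" by (simp add: e f algebra_simps)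
  finally show ?thesis unfolding cgX_def by blast
qed
lemma cgX_power: "cgX D a b \<Longrightarrow> cgX D (a ^ n) (b ^ n)"
  by (induction n) (auto intro: cgX_mult)
lemma cgX_sum: "(\<And>i. i \<in> S \<Longrightarrow> cgX D (f i) (g i)) \<Longrightarrow> cgX D (sum f S) (sum g S)"
  by (induction S rule: infinite_finite_induct) (auto intro: cgX_add)
lemma cgX_prod: "(\<And>i. i \<in> S \<Longrightarrow> cgX D (f i) (g i)) \<Longrightarrow> cgX D (prod f S) (prod g S)"
  by (induction S rule: infinite_finite_induct) (auto intro: cgX_mult)

lemma cgX_cancel:
  assumes "cgX D (a * e) (b * e)" "e $ 0 = 1"
  shows "cgX D a b"
proof -
  define u where "u = fps_right_inverse e 1"
  have eu: "e * u = 1" unfolding u_def by (rule fps_right_inverse) (simp add: assms)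
  have "cgX D (a * e * u) (b * e * u)" by (rule cgX_mult[OF assms(1)]) simp
  thus ?thesis using eu by (simp add: mult.assoc)
qed

lemma cgX_shift:
  assumes "cgX D a 1" "D' \<le> s + D"
  shows "cgX D' (fps_X ^ s * a) (fps_X ^ s)"
proof -
  obtain c where c: "a - 1 = fps_X ^ D * c" using assms(1) unfolding cgX_def by blast
  have "fps_X ^ s * a - fps_X ^ s = fps_X ^ (s + D) * c"
  proof -
    have "fps_X ^ s * a - fps_X ^ s = fps_X ^ s * (a - 1)" by (simp add: algebra_simps)
    also have "\<dots> = fps_X ^ (s + D) * c" by (simp add: c power_add mult.assoc)
    finally show ?thesis .
  qed
  hence "cgX (s + D) (fps_X ^ s * a) (fps_X ^ s)" unfolding cgX_def by blast
  thus ?thesis using assms(2) cgX_mono by blast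
qed

lemma cgX_all: "(\<And>n. cgX (f n) a b) \<Longrightarrow> (\<And>m. \<exists>n. m < f n) \<Longrightarrow> a = b"
  by (metis cgX_nth fps_ext)

definition cgM :: "int \<Rightarrow> int fps \<Rightarrow> int fps \<Rightarrow> bool" where
  "cgM m a b \<longleftrightarrow> (\<exists>c. a - b = fps_const m * c)"

lemma cgM_nth: "cgM m a b \<longleftrightarrow> (\<forall>n. m dvd (a $ n - b $ n))"
proof
  assume "cgM m a b"
  then obtain c where c: "a - b = fps_const m * c" unfolding cgM_def by blast
  show "\<forall>n. m dvd (a $ n - b $ n)"
  proof
    fix n have "(a - b) $ n = m * c $ n" by (simp add: c)
    thus "m dvd (a $ n - b $ n)" by simp
  qed
next
  assume h: "\<forall>n. m dvd (a $ n - b $ n)"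
  define c where "c = Abs_fps (\<lambda>n. (a $ n - b $ n) div m)"
  have "a - b = fps_const m * c"
    by (rule fps_ext) (simp add: c_def h)
  thus "cgM m a b" unfolding cgM_def by blast
qed

lemma cgM_refl[simp]: "cgM m a a" by (simp add: cgM_nth)
lemma cgM_sym: "cgM m a b \<Longrightarrow> cgM m b a" 
  by (simp add: cgM_nth) (metis dvd_minus_iff minus_diff_eq)
lemma cgM_trans: "cgM m a b \<Longrightarrow> cgM m b c \<Longrightarrow> cgM m a c"
  unfolding cgM_nth by (metis add_diff_eq diff_add_cancel dvd_add)
lemma cgM_add: "cgM m a b \<Longrightarrow> cgM m c d \<Longrightarrow> cgM m (a + c) (b + d)"
proof -
  assume "cgM m a b" "cgM m c d"
  then obtain e f where e: "a - b = fps_const m * e" and f: "c - d = fps_const m * f"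
    unfolding cgM_def by blast
  have "a + c - (b + d) = fps_const m * (e + f)" using e f by (simp add: algebra_simps)
  thus ?thesis unfolding cgM_def by blast
qed
lemma cgM_mult: "cgM m a b \<Longrightarrow> cgM m c d \<Longrightarrow> cgM m (a * c) (b * d)"
proof -
  assume "cgM m a b" "cgM m c d"
  then obtain e f where e: "a - b = fps_const m * e" and f: "c - d = fps_const m * f"
    unfolding cgM_def by blast
  have "a * c - b * d = (a - b) * c + b * (c - d)" by (simp add: algebra_simps)
  also have "\<dots> = fps_const m * (e * c + b * f)" by (simp add: e f algebra_simps)
  finally show ?thesis unfolding cgM_def by blast
qed
lemma cgM_sum: "(\<And>i. i \<in> S \<Longrightarrow> cgM m (f i) (g i)) \<Longrightarrow> cgM m (sum f S) (sum g S)"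
  by (induction S rule: infinite_finite_induct) (auto intro: cgM_add)

fun qp :: "'a::comm_ring_1 \<Rightarrow> nat \<Rightarrow> 'a" where
  "qp Q 0 = 1" | "qp Q (Suc n) = qp Q n * (1 - Q ^ Suc n)"

fun G :: "'a::comm_ring_1 \<Rightarrow> nat \<Rightarrow> nat \<Rightarrow> 'a" where
  "G Q 0 k = (if k = 0 then 1 else 0)"
| "G Q (Suc N) 0 = 1"
| "G Q (Suc N) (Suc k) = G Q N (Suc k) + Q ^ (N - k) * G Q N k"

lemma G_zero: "N < k \<Longrightarrow> G Q N k = 0"
  by (induction Q N k rule: G.induct) auto

lemma G_diag: "G Q N N = 1"
  by (induction N) (auto simp: G_zero)

lemma G_qp: "k \<le> N \<Longrightarrow> G Q N k * qp Q k * qp Q (N - k) = qp Q N"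
proof (induction N arbitrary: k)
  case 0 thus ?case by simp
next
  case (Suc N)
  show ?case
  proof (cases k)
    case 0 thus ?thesis by simp
  next
    case (Suc k')
    show ?thesis
    proof (cases "k' = N")
      case True thus ?thesis using Suc by (simp add: G_zero G_diag)
    next
      case False
      with Suc Suc.prems have kN: "k' < N" by simp
      have i1: "G Q N (Suc k') * qp Q (Suc k') * qp Q (N - Suc k') = qp Q N"
        using Suc.IH[of "Suc k'"] kN by (simp del: qp.simps)
      have i2: "G Q N k' * qp Q k' * qp Q (N - k') = qp Q N"
        using Suc.IH[of "k'"] kN by (simp del: qp.simps)
      have e: "N - k' = Suc (N - Suc k')" using kN by simp
      have q1: "qp Q (Suc k') = qp Q k' * (1 - Q ^ Suc k')" by simp
      have q2: "qp Q (N - k') = qp Q (N - Suc k') * (1 - Q ^ (N - k'))" using qp.simps(2)[of Q "N - Suc k'"] e by simp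
      have "G Q (Suc N) k * qp Q k * qp Q (Suc N - k)
          = (G Q N (Suc k') + Q ^ (N - k') * G Q N k') * qp Q (Suc k') * qp Q (N - k')"
        using Suc by simp
      also have "\<dots> = G Q N (Suc k') * qp Q (Suc k') * qp Q (N - Suc k') * (1 - Q ^ (N - k'))
           + Q ^ (N - k') * (G Q N k' * qp Q k' * qp Q (N - k')) * (1 - Q ^ Suc k')"
        unfolding q1 q2 by (simp add: algebra_simps del: qp.simps)
      also have "\<dots> = qp Q N * (1 - Q ^ (N - k') + Q ^ (N - k') - Q ^ (N - k') * Q ^ Suc k')"
        by (simp only: i1 i2) (simp add: algebra_simps del: qp.simps)
      also have "Q ^ (N - k') * Q ^ Suc k' = Q ^ Suc N"
        using kN by (simp only: power_add[symmetric]) simp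
      finally show ?thesis by simp
    qed
  qed
qed


lemma tri_Suc: "Suc k * (Suc k - 1) div 2 = k * (k - 1) div 2 + k"
proof -
  have "Suc k * k = k * (k - 1) + 2 * k" by (cases k) (auto simp: algebra_simps)
  moreover have "even (k * (k - 1))" by (cases k) auto
  ultimately show ?thesis by simp
qed

lemma G_0[simp]: "G Q N 0 = 1" by (cases N) auto

lemma qbin:
  fixes a b Q :: "'a::comm_ring_1"
  shows "(\<Prod>j<N. a + b * Q ^ j) = (\<Sum>k\<le>N. G Q N k * Q ^ (k * (k - 1) div 2) * a ^ (N - k) * b ^ k)"
proof (induction N)
  case 0 thus ?case by simp
next
  case (Suc N)
  define T where "T k = Q ^ (k * (k - 1) div 2)" for k
  have TS: "T (Suc k) = T k * Q ^ k" for k unfolding T_def by (simp only: tri_Suc power_add)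
  define R where "R = (\<Sum>k\<le>N. G Q N k * T k * a ^ (N - k) * b ^ k)"
  have IH: "(\<Prod>j<N. a + b * Q ^ j) = R" using Suc.IH unfolding R_def T_def by simp
  have "(\<Sum>k\<le>Suc N. G Q (Suc N) k * T k * a ^ (Suc N - k) * b ^ k)
      = a ^ Suc N + (\<Sum>k\<le>N. G Q (Suc N) (Suc k) * T (Suc k) * a ^ (N - k) * b ^ Suc k)"
    by (subst sum.atMost_Suc_shift) (simp add: T_def)
  also have "\<dots> = (a ^ Suc N + (\<Sum>k\<le>N. G Q N (Suc k) * T (Suc k) * a ^ (N - k) * b ^ Suc k))
       + (\<Sum>k\<le>N. Q ^ (N - k) * G Q N k * T (Suc k) * a ^ (N - k) * b ^ Suc k)"
    by (simp add: algebra_simps sum.distrib)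
  also have "a ^ Suc N + (\<Sum>k\<le>N. G Q N (Suc k) * T (Suc k) * a ^ (N - k) * b ^ Suc k)
      = (\<Sum>k\<le>Suc N. G Q N k * T k * a ^ (Suc N - k) * b ^ k)"
    by (simp only: sum.atMost_Suc_shift[of "\<lambda>k. G Q N k * T k * a ^ (Suc N - k) * b ^ k" N]) (simp add: T_def)
  also have "\<dots> = (\<Sum>k\<le>N. G Q N k * T k * a ^ (Suc N - k) * b ^ k)"
    by (simp add: G_zero)
  also have "\<dots> = a * R" unfolding R_def sum_distrib_left
    by (rule sum.cong) (auto simp: Suc_diff_le)
  also have "(\<Sum>k\<le>N. Q ^ (N - k) * G Q N k * T (Suc k) * a ^ (N - k) * b ^ Suc k)
      = (\<Sum>k\<le>N. (b * Q ^ N) * (G Q N k * T k * a ^ (N - k) * b ^ k))"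
  proof (rule sum.cong)
    fix k assume "k \<in> {..N}"
    hence eq: "Q ^ (N - k) * Q ^ k = Q ^ N" by (simp flip: power_add)
    have "Q ^ (N - k) * G Q N k * T (Suc k) * a ^ (N - k) * b ^ Suc k
        = b * (Q ^ (N - k) * Q ^ k) * (G Q N k * T k * a ^ (N - k) * b ^ k)"
      unfolding TS by (simp only: ac_simps power_Suc)
    thus "Q ^ (N - k) * G Q N k * T (Suc k) * a ^ (N - k) * b ^ Suc k
        = (b * Q ^ N) * (G Q N k * T k * a ^ (N - k) * b ^ k)"
      unfolding eq .
  qed simp
  also have "\<dots> = b * Q ^ N * R" unfolding R_def by (simp add: sum_distrib_left)
  finally have "(\<Sum>k\<le>Suc N. G Q (Suc N) k * T k * a ^ (Suc N - k) * b ^ k) = (a + b * Q ^ N) * R"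
    by (simp add: algebra_simps)
  thus ?case using IH unfolding T_def by (simp add: mult.commute)
qed


lemma prod_split: fixes n m :: nat shows "prod f {..<n+m} = prod f {..<n} * prod (\<lambda>i. f (n+i)) {..<m}"
  by (induction m) (simp_all add: mult.assoc)

lemma sum_2i: fixes n :: nat shows "(\<Sum>i<n. 2 * i) = n * (n - 1)"
proof (induction n)
  case (Suc n) thus ?case by (cases n) (auto simp: algebra_simps)
qed simp

definition pp :: "nat \<Rightarrow> int fps" where "pp n = (\<Prod>i<n. 1 - fps_X ^ (2 * i + 1))"

definition sqd :: "nat \<Rightarrow> nat \<Rightarrow> nat" where "sqd n k = nat ((int k - int n)^2)"

lemma lhs_fact:
  "(\<Prod>j<2*n. (fps_X::int fps) ^ (2*n-1) + (-1) * (fps_X^2)^j)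
     = (-1)^n * fps_X ^ (n*(n-1) + n*(2*n-1)) * (pp n)^2"
proof -
  define f where "f j = (fps_X::int fps) ^ (2*n-1) + (-1) * (fps_X^2)^j" for j
  have "(\<Prod>j<2*n. f j) = (\<Prod>j<n. f j) * (\<Prod>i<n. f (n+i))"
    using prod_split[of f n n] by (simp add: mult_2)
  also have "(\<Prod>j<n. f j) = (\<Prod>i<n. f (n - Suc i))"
    by (rule prod.nat_diff_reindex[symmetric])
  also have "\<dots> = (\<Prod>i<n. (-1) * fps_X ^ (2 * (n - Suc i)) * (1 - fps_X ^ (2*i+1)))"
  proof (rule prod.cong)
    fix i assume "i \<in> {..<n}"
    hence e: "2*n - 1 = 2 * (n - Suc i) + (2*i+1)" by auto
    show "f (n - Suc i) = (-1) * fps_X ^ (2 * (n - Suc i)) * (1 - fps_X ^ (2*i+1))"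
      unfolding f_def e power_add by (simp add: algebra_simps flip: power_mult)
  qed simp
  also have "\<dots> = (-1)^n * fps_X ^ (\<Sum>i<n. 2 * (n - Suc i)) * pp n"
    by (simp only: prod.distrib pp_def power_sum prod_constant card_lessThan)
  also have "(\<Sum>i<n. 2 * (n - Suc i)) = n * (n - 1)"
    using sum.nat_diff_reindex[of "\<lambda>i. 2 * i" n] sum_2i[of n] by simp
  also have "(\<Prod>i<n. f (n+i)) = (\<Prod>i<n. fps_X ^ (2*n-1) * (1 - fps_X ^ (2*i+1)))"
  proof (rule prod.cong)
    fix i assume "i \<in> {..<n}"
    hence e: "2 * (n + i) = (2*n-1) + (2*i+1)" by auto
    show "f (n + i) = fps_X ^ (2*n-1) * (1 - fps_X ^ (2*i+1))"
    proof -
      have "((fps_X::int fps)^2)^(n+i) = fps_X^(2*n-1) * fps_X^(2*i+1)"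
      proof -
        have "((fps_X::int fps)^2)^(n+i) = fps_X^(2*(n+i))" by (simp only: power_mult)
        also have "\<dots> = fps_X^((2*n-1) + (2*i+1))" by (subst e) (rule refl)
        finally show ?thesis by (simp only: power_add)
      qed
      thus ?thesis unfolding f_def by (simp add: right_diff_distrib)
    qed
  qed simp
  also have "\<dots> = fps_X ^ (n * (2*n-1)) * pp n"
    by (simp only: prod.distrib pp_def prod_constant card_lessThan) (simp only: power_mult[symmetric] mult.commute)
  finally show ?thesis unfolding f_def by (simp only: power_add power2_eq_square ac_simps)
qed

lemma expo:
  assumes "n \<ge> 1" "k \<le> 2*n"
  shows "k * (k - 1) + (2*n-1) * (2*n - k) = (n*(n-1) + n*(2*n-1)) + sqd n k"
proof -
  have h1: "int (k*(k-1)) = int k*(int k - 1)" by (cases k) (auto simp: algebra_simps)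
  have h2: "int ((2*n-1)*(2*n-k)) = (2*int n - 1)*(2*int n - int k)" using assms by (simp add: of_nat_diff)
  have h3: "int (n*(n-1)) = int n * (int n - 1)" by (cases n) (auto simp: algebra_simps)
  have h4: "int (n*(2*n-1)) = int n*(2*int n - 1)" using assms by (simp add: of_nat_diff)
  have h5: "int (sqd n k) = (int k - int n)^2" unfolding sqd_def by simp
  have "int (k * (k - 1) + (2*n-1) * (2*n - k)) = int ((n*(n-1) + n*(2*n-1)) + sqd n k)"
    by (simp only: of_nat_add h1 h2 h3 h4 h5) (simp add: algebra_simps power2_eq_square)
  thus ?thesis by (simp only: of_nat_eq_iff)
qed

lemma gauss_fin:
  assumes "n \<ge> 1"
  shows "(-1)^n * (pp n)^2 = (\<Sum>k\<le>2*n. (-1)^k * G ((fps_X::int fps)^2) (2*n) k * fps_X ^ sqd n k)"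
proof -
  define c where "c = n*(n-1) + n*(2*n-1)"
  have "fps_X ^ c * ((-1)^n * (pp n)^2) = (\<Prod>j<2*n. (fps_X::int fps) ^ (2*n-1) + (-1) * (fps_X^2)^j)"
    using lhs_fact[of n] unfolding c_def by (simp add: algebra_simps)
  also have "\<dots> = (\<Sum>k\<le>2*n. G (fps_X^2) (2*n) k * (fps_X^2) ^ (k * (k - 1) div 2)
       * (fps_X ^ (2*n-1)) ^ (2*n - k) * (-1) ^ k)"
    by (rule qbin)
  also have "\<dots> = (\<Sum>k\<le>2*n. fps_X ^ c * ((-1)^k * G ((fps_X::int fps)^2) (2*n) k * fps_X ^ sqd n k))"
  proof (rule sum.cong)
    fix k assume k: "k \<in> {..2*n}"
    have "even (k * (k - 1))" by (cases k) auto
    hence ev: "2 * (k * (k - 1) div 2) = k * (k - 1)" by (rule even_two_times_div_two)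
    have "(fps_X^2) ^ (k * (k - 1) div 2) * (fps_X ^ (2*n-1)) ^ (2*n - k)
        = (fps_X::int fps) ^ (k * (k - 1) + (2*n-1) * (2*n - k))"
      by (simp only: power_add power_mult[symmetric] ev)
    also have "\<dots> = fps_X ^ c * fps_X ^ sqd n k"
      using expo[of n k] assms k unfolding c_def by (simp add: power_add)
    finally have h: "(fps_X^2) ^ (k * (k - 1) div 2) * (fps_X ^ (2*n-1)) ^ (2*n - k)
        = (fps_X::int fps) ^ c * fps_X ^ sqd n k" .
    show "G (fps_X^2) (2*n) k * (fps_X^2) ^ (k * (k - 1) div 2)
       * (fps_X ^ (2*n-1)) ^ (2*n - k) * (-1) ^ k
       = fps_X ^ c * ((-1)^k * G ((fps_X::int fps)^2) (2*n) k * fps_X ^ sqd n k)"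
      using h by (simp add: algebra_simps)
  qed simp
  also have "\<dots> = fps_X ^ c * (\<Sum>k\<le>2*n. (-1)^k * G ((fps_X::int fps)^2) (2*n) k * fps_X ^ sqd n k)"
    by (simp add: sum_distrib_left)
  finally show ?thesis by simp
qed


definition etaI :: "nat \<Rightarrow> int fps" where
  "etaI k = Abs_fps (\<lambda>n. (\<Prod>m\<in>{1..n}. (1 - fps_X ^ (m * k) :: int fps)) $ n)"

lemma cgX_one_minus: "D \<le> e \<Longrightarrow> cgX D (1 - fps_X ^ e) 1"
  by (simp add: cgX_nth)

lemma tail:
  assumes "k \<ge> 1" "j \<le> M"
  shows "cgX ((j+1)*k) (\<Prod>m\<in>{1..M}. (1 - fps_X ^ (m * k) :: int fps)) (\<Prod>m\<in>{1..j}. 1 - fps_X ^ (m * k))"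
  using assms(2)
proof (induction M rule: dec_induct)
  case base thus ?case by simp
next
  case (step M)
  have "cgX ((j+1)*k) ((\<Prod>m\<in>{1..M}. (1 - fps_X ^ (m * k) :: int fps)) * (1 - fps_X ^ (Suc M * k)))
          ((\<Prod>m\<in>{1..j}. 1 - fps_X ^ (m * k)) * 1)"
    by (rule cgX_mult[OF step.IH cgX_one_minus]) (use step.hyps in simp)
  thus ?case by (simp add: prod.cl_ivl_Suc)
qed

lemma eta_trunc:
  assumes "k \<ge> 1"
  shows "cgX (M+1) (etaI k) (\<Prod>m\<in>{1..M}. 1 - fps_X ^ (m * k))"
  unfolding cgX_nth
proof (intro allI impI)
  fix i assume "i < M + 1"
  hence "i \<le> M" by simp
  from tail[OF assms this] have "cgX ((i+1)*k) (\<Prod>m\<in>{1..M}. (1 - fps_X ^ (m * k) :: int fps)) (\<Prod>m\<in>{1..i}. 1 - fps_X ^ (m * k))" .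
  moreover have "i < (i+1)*k" using assms mult_le_mono2[of 1 k "i+1"] by simp
  ultimately show "etaI k $ i = (\<Prod>m\<in>{1..M}. 1 - fps_X ^ (m * k)) $ i"
    unfolding etaI_def cgX_nth by simp
qed

lemma qp_X2: "qp ((fps_X::int fps)^2) j = (\<Prod>m\<in>{1..j}. 1 - fps_X ^ (m * 2))"
proof (induction j)
  case (Suc j)
  have "((fps_X::int fps)^2)^(Suc j) = fps_X^(Suc j * 2)"
    by (simp only: power_mult[symmetric] mult.commute)
  thus ?case using Suc.IH by (simp add: prod.cl_ivl_Suc)
qed simp

abbreviation "EE \<equiv> etaI 2"

lemma E_qp: "cgX (2*j+2) EE (qp (fps_X^2) j)"
proof -
  have "cgX ((2*j+1)+1) EE (\<Prod>m\<in>{1..2*j+1}. 1 - fps_X ^ (m * 2))" by (rule eta_trunc) simp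
  moreover have "cgX ((j+1)*2) (\<Prod>m\<in>{1..2*j+1}. (1 - fps_X ^ (m * 2) :: int fps)) (\<Prod>m\<in>{1..j}. 1 - fps_X ^ (m * 2))"
    by (rule tail) auto
  ultimately show ?thesis unfolding qp_X2 by (auto intro: cgX_trans simp: algebra_simps)
qed

lemma EE0: "EE $ 0 = 1" by (simp add: etaI_def)

lemma Gtrunc:
  assumes "k \<le> N"
  shows "cgX (2 * min k (N-k) + 2) (G ((fps_X::int fps)^2) N k * EE) 1"
proof -
  define D where "D = 2 * min k (N-k) + 2"
  have q: "cgX D (qp (fps_X^2) j) EE" if "min k (N-k) \<le> j" for j
    using cgX_mono[OF E_qp[of j]] that cgX_sym unfolding D_def by simp
  have "cgX D (G (fps_X^2) N k * qp (fps_X^2) k * qp (fps_X^2) (N - k)) (G (fps_X^2) N k * EE * EE)"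
    by (intro cgX_mult q cgX_refl) auto
  hence "cgX D (G (fps_X^2) N k * EE * EE) (qp (fps_X^2) N)"
    using G_qp[OF assms] cgX_sym by metis
  hence "cgX D ((G (fps_X^2) N k * EE) * EE) (1 * EE)"
    using cgX_trans q[of N] by auto
  thus ?thesis unfolding D_def using cgX_cancel EE0 by blast
qed

lemma gauss_trunc:
  assumes "n \<ge> 1"
  shows "cgX (2*n+1) ((-1)^n * (pp n)^2 * EE) (\<Sum>k\<le>2*n. (-1)^k * fps_X ^ sqd n k)"
proof -
  have "(-1)^n * (pp n)^2 * EE = (\<Sum>k\<le>2*n. (-1)^k * (fps_X ^ sqd n k * (G ((fps_X::int fps)^2) (2*n) k * EE)))"
    unfolding gauss_fin[OF assms] sum_distrib_right by (simp add: ac_simps)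
  also have "cgX (2*n+1) \<dots> (\<Sum>k\<le>2*n. (-1)^k * fps_X ^ sqd n k)"
  proof (rule cgX_sum, rule cgX_mult[OF cgX_refl])
    fix k assume k: "k \<in> {..2*n}"
    show "cgX (2*n+1) (fps_X ^ sqd n k * (G (fps_X^2) (2*n) k * EE)) (fps_X ^ sqd n k)"
    proof (rule cgX_shift[OF Gtrunc])
      show "k \<le> 2*n" using k by simp
      have "2 * int n + 1 \<le> int (sqd n k) + (2 * int (min k (2*n-k)) + 2)"
      proof (cases "k \<le> n")
        case True
        hence e1: "int (min k (2*n-k)) = int k" by (simp add: min_def)
        have e2: "int (sqd n k) = (int n - int k)^2" unfolding sqd_def by (simp add: power2_commute)
        have e3: "(int n - int k)^2 + 2 * int k + 2 - (2*int n + 1) = (int n - int k - 1)^2"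
          by (simp add: power2_eq_square algebra_simps)
        show ?thesis unfolding e1 e2 using e3 zero_le_power2[of "int n - int k - 1"] by linarith
      next
        case False
        hence "min k (2*n-k) = 2*n-k" using k by (simp add: min_def)
        hence e1: "int (min k (2*n-k)) = 2 * int n - int k" using k by (simp add: of_nat_diff)
        have e2: "int (sqd n k) = (int k - int n)^2" unfolding sqd_def by simp
        have e3: "(int k - int n)^2 + 2 * (2 * int n - int k) + 2 - (2*int n + 1) = (int k - int n - 1)^2"
          by (simp add: power2_eq_square algebra_simps)
        show ?thesis unfolding e1 e2 using e3 zero_le_power2[of "int k - int n - 1"] by linarith
      qed
      thus "2*n+1 \<le> sqd n k + (2 * min k (2*n-k) + 2)" by linarith
    qed
  qed
  finally show ?thesis .
qed


definition sqc :: "nat \<Rightarrow> nat" where "sqc m = card {i::int. i^2 = int m}"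

definition tt :: "int fps" where "tt = Abs_fps (\<lambda>m. (-1)^m * int (sqc m))"

lemma sum_to_t:
  assumes "n \<ge> 1"
  shows "cgX (2*n+1) ((-1)^n * (\<Sum>k\<le>2*n. (-1)^k * fps_X ^ sqd n k)) tt"
  unfolding cgX_nth
proof (intro allI impI)
  fix m assume m: "m < 2*n+1"
  define K where "K = {k\<in>{..2*n}. sqd n k = m}"
  have sqdK: "(int k - int n)^2 = int m" if "k \<in> K" for k
    using that unfolding K_def sqd_def by auto
  have par: "(-1::int)^k = (-1)^(n+m)" if "k \<in> K" for k
  proof -
    define i where "i = int k - int n"
    have h: "int (k + n + m) = 2 * int n + i * (i + 1)"
      using sqdK[OF that] unfolding i_def by (simp add: power2_eq_square algebra_simps)
    have "even (i * (i + 1))" by simp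
    then obtain j where "i * (i + 1) = 2 * j" by blast
    hence "int (k + n + m) = 2 * (int n + j)" using h by simp
    hence "even (int (k + n + m))" by (metis dvd_triv_left)
    hence "even (k + n + m)" by presburger
    hence "even k = even (n + m)" by presburger
    thus ?thesis by (simp add: minus_one_power_iff)
  qed
  have bij: "bij_betw (\<lambda>k. int k - int n) K {i::int. i^2 = int m}"
  proof (rule bij_betwI')
    show "(int x - int n = int y - int n) = (x = y)" for x y by simp
    show "int x - int n \<in> {i. i\<^sup>2 = int m}" if "x \<in> K" for x using sqdK[OF that] by simp
    fix i :: int assume "i \<in> {i. i\<^sup>2 = int m}"
    hence i: "i^2 = int m" by simp
    have "\<bar>i\<bar> \<le> int n"
    proof (rule ccontr)
      assume "\<not> \<bar>i\<bar> \<le> int n"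
      hence "int n + 1 \<le> \<bar>i\<bar>" by simp
      hence "(int n + 1)^2 \<le> \<bar>i\<bar>^2" by (rule power_mono) simp
      hence "(int n + 1)^2 \<le> int m" using i by simp
      moreover have "(int n + 1)^2 = int n * int n + 2 * int n + 1" by (simp add: power2_eq_square algebra_simps)
      moreover have "0 \<le> int n * int n" by simp
      moreover have "int m < 2 * int n + 1" using m by simp
      ultimately show False by linarith
    qed
    hence "nat (i + int n) \<in> K" "i = int (nat (i + int n)) - int n"
      unfolding K_def sqd_def using i by auto
    thus "\<exists>k\<in>K. i = int k - int n" by blast
  qed
  have "((-1)^n * (\<Sum>k\<le>2*n. (-1)^k * fps_X ^ sqd n k) :: int fps) $ m
      = (-1)^n * (\<Sum>k\<le>2*n. (if sqd n k = m then (-1)^k else 0))"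
  proof -
    have c: "((-1::int fps)^j * f) $ i = (-1)^j * f $ i" for j f i
      by (induction j) simp_all
    have "((-1)^n * (\<Sum>k\<le>2*n. (-1)^k * fps_X ^ sqd n k) :: int fps) $ m
        = (-1)^n * (\<Sum>k\<le>2*n. (-1)^k * (fps_X ^ sqd n k :: int fps) $ m)"
      by (simp only: c fps_sum_nth)
    also have "(\<Sum>k\<le>2*n. (-1)^k * (fps_X ^ sqd n k :: int fps) $ m)
        = (\<Sum>k\<le>2*n. (if sqd n k = m then (-1)^k else 0))"
      by (rule sum.cong) (auto simp: fps_X_power_nth)
    finally show ?thesis .
  qed
  also have "(\<Sum>k\<le>2*n. (if sqd n k = m then (-1::int)^k else 0)) = (\<Sum>k\<in>K. (-1)^k)"
    unfolding K_def by (rule sum.inter_filter[symmetric]) simp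
  also have "\<dots> = (\<Sum>k\<in>K. (-1)^(n+m))" by (rule sum.cong) (simp_all add: par)
  also have "\<dots> = int (card K) * (-1)^(n+m)" by simp
  also have "card K = sqc m" unfolding sqc_def by (rule bij_betw_same_card[OF bij])
  finally show "((-1)^n * (\<Sum>k\<le>2*n. (-1)^k * fps_X ^ sqd n k) :: int fps) $ m = tt $ m"
    unfolding tt_def by (simp add: power_add algebra_simps flip: power_mult_distrib)
qed

lemma split_odd_even:
  "(\<Prod>m\<in>{1..2*n}. (1 - fps_X ^ (m * 1) :: int fps)) = pp n * (\<Prod>m\<in>{1..n}. 1 - fps_X ^ (m * 2))"
proof -
  define f where "f m = (1 - fps_X^(m*1) :: int fps)" for m
  define g where "g m = (1 - fps_X^(m*2) :: int fps)" for m
  have "(\<Prod>m\<in>{1..2*n}. f m) = pp n * (\<Prod>m\<in>{1..n}. g m)"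
  proof (induction n)
    case 0 thus ?case by (simp add: pp_def)
  next
    case (Suc n)
    have e: "2 * Suc n = Suc (Suc (2*n))" by simp
    have A: "(\<Prod>m\<in>{1..2 * Suc n}. f m) = (\<Prod>m\<in>{1..2*n}. f m) * f (Suc (2*n)) * f (Suc (Suc (2*n)))"
      unfolding e by (simp add: prod.cl_ivl_Suc)
    have B: "f (Suc (Suc (2*n))) = g (Suc n)" unfolding f_def g_def by (simp add: algebra_simps)
    have C: "f (Suc (2*n)) = 1 - fps_X ^ (2*n+1)" unfolding f_def by simp
    have D: "pp (Suc n) = pp n * (1 - fps_X ^ (2*n+1))" unfolding pp_def by simp
    have F: "(\<Prod>m\<in>{1..Suc n}. g m) = (\<Prod>m\<in>{1..n}. g m) * g (Suc n)" by (simp add: prod.cl_ivl_Suc)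
    show ?case unfolding A B C D F Suc.IH by (simp only: ac_simps)
  qed
  thus ?thesis unfolding f_def g_def .
qed

definition e1 :: "int fps" where "e1 = etaI 1"

lemma gaussI: "e1^2 = tt * EE"
proof (rule cgX_all[of "\<lambda>n. 2*(n+1)+1"])
  fix n0 :: nat
  define n where "n = n0 + 1"
  have n1: "n \<ge> 1" unfolding n_def by simp
  have a: "cgX (2*n+1) e1 (pp n * qp (fps_X^2) n)"
    using eta_trunc[of 1 "2*n"] unfolding e1_def split_odd_even qp_X2 by simp
  have b: "cgX (2*n+1) (qp (fps_X^2) n) EE"
    using cgX_mono[OF E_qp[of n]] cgX_sym by simp
  have c: "cgX (2*n+1) e1 (pp n * EE)"
    using cgX_trans[OF a cgX_mult[OF cgX_refl b]] .
  have sgn: "(-1::int fps)^n * (-1)^n = 1" by (simp flip: power_mult_distrib)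
  have d: "cgX (2*n+1) ((pp n)^2 * EE) tt"
  proof -
    have "cgX (2*n+1) ((-1)^n * ((-1)^n * (pp n)^2 * EE)) ((-1)^n * (\<Sum>k\<le>2*n. (-1)^k * fps_X ^ sqd n k))"
      by (rule cgX_mult[OF cgX_refl gauss_trunc[OF n1]])
    hence "cgX (2*n+1) ((-1)^n * ((-1)^n * (pp n)^2 * EE)) tt"
      by (rule cgX_trans[OF _ sum_to_t[OF n1]])
    moreover have "(-1)^n * ((-1)^n * (pp n)^2 * EE) = (pp n)^2 * EE"
      using sgn by (simp add: mult.assoc[symmetric])
    ultimately show ?thesis by simp
  qed
  have "cgX (2*n+1) (e1^2) ((pp n * EE)^2)" by (rule cgX_power[OF c])
  moreover have "(pp n * EE)^2 = ((pp n)^2 * EE) * EE" by (simp add: power2_eq_square ac_simps)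
  ultimately have "cgX (2*n+1) (e1^2) (((pp n)^2 * EE) * EE)" by simp
  hence "cgX (2*n+1) (e1^2) (tt * EE)" by (rule cgX_trans[OF _ cgX_mult[OF d cgX_refl]])
  thus "cgX (2*(n0+1)+1) (e1^2) (tt * EE)" unfolding n_def .
next
  fix m :: nat show "\<exists>n::nat. m < 2*(n+1)+1" by (rule exI[of _ m]) simp
qed


lemma polyid:
  fixes x :: "'a::comm_ring_1"
  shows "(1 - 16*x + 16*x^2 + 32*x^4) * (1 + 2*x)^8
     = 1 + 64 * (-2*x^2 - 17*x^3 - 66*x^4 - 132*x^5 - 84*x^6 + 240*x^7 + 756*x^8
          + 1088*x^9 + 960*x^10 + 512*x^11 + 128*x^12)"
  by (simp add: algebra_simps eval_nat_numeral)

definition Dbl :: "int fps \<Rightarrow> int fps" where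
  "Dbl a = Abs_fps (\<lambda>m. if even m then a $ (m div 2) else 0)"

lemma frob_fin:
  assumes "finite S"
  shows "cgM 2 ((\<Sum>i\<in>S. fps_const (c i) * fps_X ^ i)^2) (\<Sum>i\<in>S. fps_const ((c i)^2) * fps_X ^ (2*i))"
  using assms
proof (induction S rule: finite_induct)
  case empty thus ?case by simp
next
  case (insert j S)
  define A where "A = (\<Sum>i\<in>S. fps_const (c i) * fps_X ^ i)"
  define b where "b = fps_const (c j) * (fps_X::int fps) ^ j"
  have bb: "b^2 = fps_const ((c j)^2) * fps_X ^ (2*j)"
    unfolding b_def by (simp add: power_mult_distrib fps_const_power power_mult mult.commute)
  have "(b + A)^2 = fps_const 2 * (A * b) + (b^2 + A^2)"
    by (simp add: power2_eq_square algebra_simps numeral_fps_const[symmetric])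
  moreover have "cgM 2 (fps_const 2 * (A * b) + (b^2 + A^2)) (b^2 + A^2)"
    unfolding cgM_def by (rule exI[of _ "A * b"]) simp
  moreover have "cgM 2 (b^2 + A^2) (b^2 + (\<Sum>i\<in>S. fps_const ((c i)^2) * fps_X ^ (2*i)))"
    by (rule cgM_add[OF cgM_refl insert.IH[folded A_def]])
  ultimately show ?case using insert.hyps unfolding A_def b_def bb[unfolded b_def]
    by (metis (no_types, lifting) cgM_trans sum.insert)
qed

lemma frob: "cgM 2 (a * a) (Dbl a)"
  unfolding cgM_nth
proof
  fix m
  define T where "T = (\<Sum>i\<le>m. fps_const (a $ i) * fps_X ^ i)"
  define U where "U = (\<Sum>i\<le>m. fps_const ((a $ i)^2) * (fps_X::int fps) ^ (2*i))"
  have T: "cgX (m+1) a T" unfolding cgX_nth T_def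
    by (auto simp: fps_sum_nth mult_delta_right)
  have "(a * a) $ m = (T * T) $ m" using cgX_mult[OF T T] unfolding cgX_nth by simp
  moreover have "2 dvd ((T * T) $ m - U $ m)"
    using frob_fin[of "{..m}" "\<lambda>i. a $ i"] unfolding cgM_nth T_def U_def power2_eq_square by simp
  moreover have "U $ m = (if even m then (a $ (m div 2))^2 else 0)"
  proof -
    have "U $ m = (\<Sum>i\<le>m. if m = 2*i then (a $ i)^2 else 0)"
      unfolding U_def by (simp add: fps_sum_nth) (rule sum.cong; simp)
    also have "\<dots> = (\<Sum>i\<le>m. if i = m div 2 \<and> even m then (a $ (m div 2))^2 else 0)"
      by (rule sum.cong) auto
    also have "\<dots> = (if even m then (a $ (m div 2))^2 else 0)"
      by (cases "even m") (simp_all add: sum.delta)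
    finally show ?thesis .
  qed
  moreover have "2 dvd ((a $ (m div 2))^2 - a $ (m div 2))"
  proof -
    have "(a $ (m div 2))^2 - a $ (m div 2) = a $ (m div 2) * (a $ (m div 2) - 1)"
      by (simp add: power2_eq_square algebra_simps)
    thus ?thesis by simp
  qed
  ultimately have h1: "(a * a) $ m - Dbl a $ m = ((T * T) $ m - U $ m) + (U $ m - Dbl a $ m)"
    and h2: "2 dvd ((T * T) $ m - U $ m)" and h3: "2 dvd (U $ m - Dbl a $ m)"
    by (simp_all add: Dbl_def)
  show "2 dvd ((a * a) $ m - Dbl a $ m)" unfolding h1 using h2 h3 by (rule dvd_add)
qed


definition ofi :: "int fps \<Rightarrow> rat fps" where
  "ofi f = Abs_fps (\<lambda>n. of_int (f $ n))"

lemma ofi_nth[simp]: "ofi f $ n = of_int (f $ n)" by (simp add: ofi_def)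
lemma ofi_add[simp]: "ofi (a + b) = ofi a + ofi b" by (rule fps_ext) simp
lemma ofi_diff[simp]: "ofi (a - b) = ofi a - ofi b" by (rule fps_ext) simp
lemma ofi_uminus[simp]: "ofi (- a) = - ofi a" by (rule fps_ext) simp
lemma ofi_one[simp]: "ofi 1 = 1" by (rule fps_ext) simp
lemma ofi_zero[simp]: "ofi 0 = 0" by (rule fps_ext) simp
lemma ofi_X[simp]: "ofi fps_X = fps_X" by (rule fps_ext) (simp add: fps_X_def)
lemma ofi_numeral[simp]: "ofi (numeral k) = numeral k" by (rule fps_ext) (simp add: fps_numeral_nth)
lemma ofi_mult[simp]: "ofi (a * b) = ofi a * ofi b"
  by (rule fps_ext) (simp add: fps_mult_nth)
lemma ofi_power[simp]: "ofi (a ^ n) = ofi a ^ n" by (induction n) simp_all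
lemma ofi_prod: "ofi (prod f S) = prod (\<lambda>i. ofi (f i)) S"
  by (induction S rule: infinite_finite_induct) simp_all

lemma eta_ofi: "eta_f k = ofi (etaI k)"
proof (rule fps_ext)
  fix n
  have "(\<Prod>m\<in>{1..n}. (1 - fps_X^(m*k)::rat fps)) = ofi (\<Prod>m\<in>{1..n}. 1 - fps_X^(m*k))"
    by (simp add: ofi_prod)
  thus "eta_f k $ n = ofi (etaI k) $ n" by (simp add: eta_f_def etaI_def)
qed

lemma sqc0: "sqc 0 = 1"
proof -
  have "{i::int. i^2 = int 0} = {0}" by auto
  thus ?thesis unfolding sqc_def by simp
qed

lemma sqc_even: assumes "m > 0" shows "even (sqc m)"
proof -
  define S where "S = {i::int. i^2 = int m}"
  define A where "A = {i\<in>S. i > 0}"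
  have fin: "finite S"
  proof (rule finite_subset)
    show "S \<subseteq> {- int m..int m}"
    proof
      fix i assume "i \<in> S"
      hence "i^2 = int m" unfolding S_def by simp
      moreover have "\<bar>i\<bar> \<le> i^2" by (smt (verit, ccfv_SIG) power2_minus power_0_left self_le_power zero_less_numeral)
      ultimately show "i \<in> {- int m..int m}" by auto
    qed
  qed simp
  have "S = A \<union> uminus ` A"
  proof -
    have "0 \<notin> S" unfolding S_def using assms by simp
    show ?thesis
    proof
      show "S \<subseteq> A \<union> uminus ` A"
      proof
        fix i assume i: "i \<in> S"
        show "i \<in> A \<union> uminus ` A"
        proof (cases "i > 0")
          case True thus ?thesis using i unfolding A_def by simp
        next
          case False
          with i \<open>0 \<notin> S\<close> have "i < 0" by (cases "i = 0") auto
          hence "-i \<in> A" using i unfolding A_def S_def by simp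
          hence "- (- i) \<in> uminus ` A" by blast
          thus ?thesis by simp
        qed
      qed
      show "A \<union> uminus ` A \<subseteq> S" unfolding A_def S_def by auto
    qed
  qed
  moreover have "A \<inter> uminus ` A = {}" unfolding A_def by auto
  moreover have "card (uminus ` A) = card A" by (rule card_image) (simp add: inj_on_def)
  moreover have "finite A" using fin unfolding A_def by simp
  ultimately have "card S = 2 * card A" by (simp add: card_Un_disjoint)
  thus ?thesis unfolding sqc_def S_def by simp
qed


definition xx :: "int fps" where
  "xx = Abs_fps (\<lambda>m. if m = 0 then 0 else (-1)^m * (int (sqc m) div 2))"
definition ss :: "int fps" where
  "ss = Abs_fps (\<lambda>m. if m = 0 then 0 else int (sqc m) div 2)"
definition "yy = Dbl ss"
definition "zz = Dbl yy"

lemma two_mult_nth: fixes f :: "'a::comm_ring_1 fps" shows "(2 * f) $ n = 2 * f $ n"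
  by (simp add: numeral_fps_const)

lemma tt_eq: "tt = 1 + 2 * xx"
proof (rule fps_ext)
  fix m
  show "tt $ m = (1 + 2 * xx) $ m"
  proof (cases "m = 0")
    case True thus ?thesis by (simp add: tt_def xx_def sqc0 two_mult_nth)
  next
    case False
    hence "even (int (sqc m))" using sqc_even by simp
    hence "2 * (int (sqc m) div 2) = int (sqc m)" by simp
    thus ?thesis using False by (simp add: tt_def xx_def two_mult_nth algebra_simps)
  qed
qed

lemma xx_ss: "cgM 2 xx ss"
  unfolding cgM_nth
proof
  fix m
  show "2 dvd (xx $ m - ss $ m)"
  proof (cases "even m")
    case True thus ?thesis by (simp add: xx_def ss_def)
  next
    case False
    hence "xx $ m = - ss $ m" by (simp add: xx_def ss_def)
    hence "xx $ m - ss $ m = - (2 * ss $ m)" by simp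
    thus ?thesis by (metis dvd_minus_iff dvd_triv_left)
  qed
qed

lemma Dbl_cong: "cgM 2 a b \<Longrightarrow> cgM 2 (Dbl a) (Dbl b)"
  unfolding cgM_nth Dbl_def by simp

lemma x2: "cgM 2 (xx * xx) yy"
  unfolding yy_def by (rule cgM_trans[OF frob Dbl_cong[OF xx_ss]])

lemma x4: "cgM 2 (xx ^ 4) zz"
proof -
  have "xx ^ 4 = (xx * xx) * (xx * xx)" by (simp add: eval_nat_numeral ac_simps)
  moreover have "cgM 2 ((xx * xx) * (xx * xx)) (yy * yy)" by (rule cgM_mult[OF x2 x2])
  ultimately show ?thesis unfolding zz_def using cgM_trans frob by metis
qed

lemma compose_Xpow_nth:
  fixes a :: "'a::comm_ring_1 fps"
  assumes "k > 0"
  shows "(a oo fps_X ^ k) $ n = (if k dvd n then a $ (n div k) else 0)"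
proof -
  have "(a oo fps_X ^ k) $ n = (\<Sum>i\<in>{0..n}. if n = k * i then a $ i else 0)"
    unfolding fps_compose_nth by (rule sum.cong) (simp_all add: power_mult[symmetric])
  also have "\<dots> = (\<Sum>i\<in>{0..n}. if i = n div k \<and> k dvd n then a $ (n div k) else 0)"
    by (rule sum.cong) (use assms in auto)
  also have "\<dots> = (if k dvd n then a $ (n div k) else 0)"
  proof (cases "k dvd n")
    case True
    have "n div k \<le> n" by simp
    thus ?thesis using True by (simp add: sum.delta)
  qed simp
  finally show ?thesis .
qed

lemma phi_nth: "ramanujan_phi $ m = of_nat (sqc m)"
  by (simp add: ramanujan_phi_def sqc_def)

lemma phim: "ramanujan_phi oo (- fps_X) = ofi tt"
  by (rule fps_ext) (simp add: fps_compose_uminus' phi_nth tt_def)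

lemma phi2: "ramanujan_phi oo fps_X ^ 2 = ofi (1 + 2 * yy)"
proof (rule fps_ext)
  fix n
  have l: "(ramanujan_phi oo fps_X ^ 2) $ n = (if even n then of_nat (sqc (n div 2)) else 0)"
    by (simp add: compose_Xpow_nth phi_nth)
  show "(ramanujan_phi oo fps_X ^ 2) $ n = ofi (1 + 2 * yy) $ n"
    unfolding l
  proof (cases "n = 0")
    case True thus "(if even n then of_nat (sqc (n div 2)) else 0) = ofi (1 + 2 * yy) $ n"
      by (simp add: sqc0 yy_def Dbl_def ss_def two_mult_nth)
  next
    case False
    show "(if even n then of_nat (sqc (n div 2)) else 0) = ofi (1 + 2 * yy) $ n"
    proof (cases "even n")
      case True
      with False have "n div 2 > 0" by auto
      hence "even (int (sqc (n div 2)))" using sqc_even by simp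
      hence "2 * (int (sqc (n div 2)) div 2) = int (sqc (n div 2))" by simp
      thus ?thesis using True False \<open>n div 2 > 0\<close>
        by (simp add: yy_def Dbl_def ss_def two_mult_nth)
    qed (simp add: yy_def Dbl_def ss_def two_mult_nth False)
  qed
qed

lemma phi4: "ramanujan_phi oo fps_X ^ 4 = ofi (1 + 2 * zz)"
proof (rule fps_ext)
  fix n
  have l: "(ramanujan_phi oo fps_X ^ 4) $ n = (if 4 dvd n then of_nat (sqc (n div 4)) else 0)"
    by (simp add: compose_Xpow_nth phi_nth)
  have zn: "zz $ n = (if 4 dvd n then ss $ (n div 4) else 0)"
  proof -
    have "4 dvd n \<longleftrightarrow> even n \<and> even (n div 2)" by presburger
    moreover have "n div 2 div 2 = n div 4" by (simp add: div_mult2_eq)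
    ultimately show ?thesis by (simp add: zz_def yy_def Dbl_def)
  qed
  show "(ramanujan_phi oo fps_X ^ 4) $ n = ofi (1 + 2 * zz) $ n"
    unfolding l
  proof (cases "n = 0")
    case True thus "(if 4 dvd n then of_nat (sqc (n div 4)) else 0) = ofi (1 + 2 * zz) $ n"
      using zn by (simp add: sqc0 ss_def two_mult_nth)
  next
    case False
    show "(if 4 dvd n then of_nat (sqc (n div 4)) else 0) = ofi (1 + 2 * zz) $ n"
    proof (cases "4 dvd n")
      case True
      with False have "n div 4 > 0" by auto
      hence "even (int (sqc (n div 4)))" using sqc_even by simp
      hence "2 * (int (sqc (n div 4)) div 2) = int (sqc (n div 4))" by simp
      thus ?thesis using True False \<open>n div 4 > 0\<close>
        by (simp add: zn ss_def two_mult_nth)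
    qed (simp add: zn two_mult_nth False)
  qed
qed


lemma cong64:
  fixes u :: "int fps"
  assumes ut: "u * tt = 1"
  shows "cgM 64 (u ^ 8) (21 + 12 * tt ^ 2 + 16 * (1 + 2 * yy) + 16 * (1 + 2 * zz))"
proof -
  define w where "w = 1 - 16*xx + 16*xx^2 + 32*xx^4"
  define P where "P = (-2*xx^2 - 17*xx^3 - 66*xx^4 - 132*xx^5 - 84*xx^6 + 240*xx^7 + 756*xx^8
          + 1088*xx^9 + 960*xx^10 + 512*xx^11 + 128*xx^12 :: int fps)"
  have wt: "w * tt^8 = 1 + 64 * P" unfolding w_def P_def tt_eq by (rule polyid)
  have "u^8 = u^8 * (w * tt^8 - 64 * P)" using wt by simp
  also have "\<dots> = w * (u * tt)^8 - 64 * P * u^8" by (simp add: algebra_simps power_mult_distrib)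
  also have "\<dots> = w - 64 * P * u^8" using ut by simp
  finally have "u^8 - w = fps_const 64 * (- P * u^8)" by (simp add: numeral_fps_const algebra_simps)
  hence c1: "cgM 64 (u^8) w" unfolding cgM_def by blast
  obtain d1 where d1: "xx * xx - yy = fps_const 2 * d1" using x2 unfolding cgM_def by blast
  obtain d2 where d2: "xx ^ 4 - zz = fps_const 2 * d2" using x4 unfolding cgM_def by blast
  define r where "r = (21 + 12 * tt ^ 2 + 16 * (1 + 2 * yy) + 16 * (1 + 2 * zz) :: int fps)"
  have "w - r - 64 * (-1 - xx - yy - d1 + d2) = -32 * (xx * xx - yy - 2 * d1) + 32 * (xx^4 - zz - 2 * d2)"
    unfolding w_def r_def tt_eq by (simp add: algebra_simps power2_eq_square)
  also have "\<dots> = 0" using d1 d2 by (simp add: numeral_fps_const)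
  finally have "w - r = fps_const 64 * (-1 - xx - yy - d1 + d2)" by (simp add: numeral_fps_const)
  hence "cgM 64 w r" unfolding cgM_def by blast
  thus ?thesis using cgM_trans[OF c1] unfolding r_def by blast
qed

theorem mainTheorem7:
  fixes L R :: "rat fps"
  defines "L \<equiv> eta_f 2 ^ 8 / eta_f 1 ^ 16"
      and "R \<equiv> 21 + 12 * (ramanujan_phi oo (- fps_X)) ^ 2
                 + 16 * (ramanujan_phi oo (fps_X ^ 2))
                 + 16 * (ramanujan_phi oo (fps_X ^ 4))"
  shows "\<forall>n. fps_nth L n \<in> \<int> \<and> fps_nth R n \<in> \<int> \<and> (fps_nth L n - fps_nth R n) / 64 \<in> \<int>"
proof -
  define u where "u = fps_right_inverse tt 1"
  have tt0: "tt $ 0 = 1" by (simp add: tt_def sqc0)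
  have ut: "tt * u = 1" unfolding u_def by (rule fps_right_inverse) (simp add: tt0)
  have EE0': "EE $ 0 = 1" by (rule EE0)
  define B where "B = ofi tt ^ 8 * ofi EE ^ 8"
  have B0: "B $ 0 = 1" unfolding B_def by (simp add: tt0 EE0 fps_nth_power_0)
  have e16: "eta_f 1 ^ 16 = B"
  proof -
    have "eta_f 1 ^ 16 = ofi (e1 ^ 2) ^ 8" by (simp add: eta_ofi e1_def flip: power_mult)
    also have "\<dots> = B" unfolding gaussI B_def by (simp add: power_mult_distrib)
    finally show ?thesis .
  qed
  have uB: "ofi u ^ 8 * B = ofi EE ^ 8"
  proof -
    have "ofi u ^ 8 * B = ofi (tt * u) ^ 8 * ofi EE ^ 8" unfolding B_def by (simp add: power_mult_distrib ac_simps)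
    thus ?thesis using ut by simp
  qed
  have L: "L = ofi (u ^ 8)"
  proof -
    have "L = ofi EE ^ 8 * inverse B" unfolding L_def e16 eta_ofi[of 2]
      by (rule fps_divide_unit) (simp add: B0)
    also have "\<dots> = ofi u ^ 8 * (B * inverse B)" by (simp add: uB[symmetric] ac_simps)
    also have "B * inverse B = 1" by (rule inverse_mult_eq_1') (simp add: B0)
    finally show ?thesis by simp
  qed
  define r where "r = (21 + 12 * tt ^ 2 + 16 * (1 + 2 * yy) + 16 * (1 + 2 * zz) :: int fps)"
  have R: "R = ofi r" unfolding R_def r_def phim phi2 phi4 by simp
  have c: "cgM 64 (u ^ 8) r" unfolding r_def by (rule cong64) (simp add: ut mult.commute)
  show ?thesis
  proof
    fix n
    have d: "64 dvd ((u ^ 8) $ n - r $ n)" using c unfolding cgM_nth by blast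
    then obtain q where q: "(u ^ 8) $ n - r $ n = 64 * q" by blast
    have "rat_of_int ((u ^ 8) $ n - r $ n) = rat_of_int (64 * q)" using q by simp
    hence "rat_of_int ((u ^ 8) $ n) - rat_of_int (r $ n) = 64 * rat_of_int q" by simp
    hence "(L $ n - R $ n) / 64 = of_int q" unfolding L R ofi_nth by simp
    thus "L $ n \<in> \<int> \<and> R $ n \<in> \<int> \<and> (L $ n - R $ n) / 64 \<in> \<int>"
      unfolding L R ofi_nth by simp
  qed
qed


end
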